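(* Let $(X,d,\mu)$ be a metric measure space with $\mu$ doubling, and let $\nu$ be a doubling measure on $X$. If $\nu$ satisfies condition (1), then $\nu$ satisfies condition (2) and condition (4).
   Context: $\mu,\nu$ are Borel measures giving positive finite measure to balls; doubling means $\mu(B(x,2r))\le c\,\mu(B(x,r))$ for all $x,r$. $\nu$ is a weighted measure with respect to $\mu$ if there exists $0\le\omega\in L^1_{loc}(X)$ with $\nu(A)=\int_A\omega\,d\mu$ for every $\mu$-measurable $A$. Condition (1): there are $0<\varepsilon,\delta<1$ such that for each ball $B$ and each measurable $E\subseteq B$, $\mu(E)\le\varepsilon\mu(B)$ implies $\nu(E)\le(1-\delta)\nu(B)$. Condition (2): there are constants $c>0$ and $p\ge1$ such that $\nu(E)\le c\,\nu(B)\big(\mu(E)/\mu(B)\big)^{1/p}$ for every ball $B$ and every measurable $E\subseteq B$. Condition (4): $\nu$ is a weighted measure with respect to $\mu$, and there are constants $c>0$, $p\ge1$ such that $\nu(E)\ge c\,\nu(B)\big(\mu(E)/\mu(B)\big)^{p}$ for every ball $B$ and every measurable $E\subseteq B$. *)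

theory Defs
  imports "HOL-Analysis.Analysis"
begin

definition ball_measure :: "'a::metric_space measure \<Rightarrow> bool" where
  "ball_measure M \<longleftrightarrow> sets M = sets borel \<and>
     (\<forall>x r. r > 0 \<longrightarrow> 0 < emeasure M (ball x r) \<and> emeasure M (ball x r) < \<infinity>)"

definition doubling_measure :: "'a::metric_space measure \<Rightarrow> bool" where
  "doubling_measure M \<longleftrightarrow> ball_measure M \<and>
     (\<exists>c. \<forall>x r. r > 0 \<longrightarrow> measure M (ball x (2 * r)) \<le> c * measure M (ball x r))"

definition cond1 :: "'a::metric_space measure \<Rightarrow> 'a measure \<Rightarrow> bool" where
  "cond1 M N \<longleftrightarrow> (\<exists>\<epsilon> \<delta>::real. 0 < \<epsilon> \<and> \<epsilon> < 1 \<and> 0 < \<delta> \<and> \<delta> < 1 \<and>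
     (\<forall>x r E. r > 0 \<longrightarrow> E \<in> sets M \<longrightarrow> E \<subseteq> ball x r \<longrightarrow>
        measure M E \<le> \<epsilon> * measure M (ball x r) \<longrightarrow>
        measure N E \<le> (1 - \<delta>) * measure N (ball x r)))"

definition cond2 :: "'a::metric_space measure \<Rightarrow> 'a measure \<Rightarrow> bool" where
  "cond2 M N \<longleftrightarrow> (\<exists>c p::real. c > 0 \<and> p \<ge> 1 \<and>
     (\<forall>x r E. r > 0 \<longrightarrow> E \<in> sets M \<longrightarrow> E \<subseteq> ball x r \<longrightarrow>
        measure N E \<le> c * measure N (ball x r) *
          (measure M E / measure M (ball x r)) powr (1 / p)))"

definition weighted_measure :: "'a::metric_space measure \<Rightarrow> 'a measure \<Rightarrow> bool" where
  "weighted_measure M N \<longleftrightarrow> (\<exists>\<omega> :: 'a \<Rightarrow> real.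
     \<omega> \<in> borel_measurable M \<and> (\<forall>y. 0 \<le> \<omega> y) \<and>
     (\<forall>x r. r > 0 \<longrightarrow> set_integrable M (ball x r) \<omega>) \<and>
     (\<forall>A \<in> sets M. emeasure N A = (\<integral>\<^sup>+ y \<in> A. ennreal (\<omega> y) \<partial>M)))"

definition cond4 :: "'a::metric_space measure \<Rightarrow> 'a measure \<Rightarrow> bool" where
  "cond4 M N \<longleftrightarrow> weighted_measure M N \<and> (\<exists>c p::real. c > 0 \<and> p \<ge> 1 \<and>
     (\<forall>x r E. r > 0 \<longrightarrow> E \<in> sets M \<longrightarrow> E \<subseteq> ball x r \<longrightarrow>
        measure N E \<ge> c * measure N (ball x r) *
          (measure M E / measure M (ball x r)) powr p))"

end

theory Submission imports Defs begin

locale dbl =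
  fixes M :: "'a::metric_space measure" and c :: real
  assumes sets_M: "sets M = sets borel"
    and pos: "\<And>x r. r > 0 \<Longrightarrow> 0 < emeasure M (ball x r)"
    and fin: "\<And>x r. r > 0 \<Longrightarrow> emeasure M (ball x r) < \<infinity>"
    and c1: "c \<ge> 1"
    and dbl: "\<And>x r. r > 0 \<Longrightarrow> measure M (ball x (2*r)) \<le> c * measure M (ball x r)"
begin

lemma space_M[simp]: "space M = UNIV"
  using sets_M sets_eq_imp_space_eq by fastforce

lemma open_sets[intro,simp]: "open U \<Longrightarrow> U \<in> sets M"
  using sets_M by auto

lemma ball_sets[intro,simp]: "ball x r \<in> sets M"
  by simp

lemma bounded_fmeasurable: "A \<in> sets M \<Longrightarrow> bounded A \<Longrightarrow> A \<in> fmeasurable M"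
proof -
  assume A: "A \<in> sets M" "bounded A"
  obtain r where "r > 0" "A \<subseteq> ball undefined r"
    using bounded_subset_ballD[OF A(2)] by blast
  then show ?thesis using A fin[of r undefined]
    by (meson fmeasurableI fmeasurableI2 ball_sets)
qed

lemma sub_fm: "X \<in> sets M \<Longrightarrow> X \<subseteq> D \<Longrightarrow> bounded D \<Longrightarrow> X \<in> fmeasurable M"
  using bounded_fmeasurable bounded_subset by blast

lemma ball_fmeasurable[intro,simp]: "ball x r \<in> fmeasurable M"
  by (simp add: bounded_fmeasurable)

lemma ball_pos: "r > 0 \<Longrightarrow> measure M (ball x r) > 0"
  using pos[of r x] fin[of r x]
  by (metis emeasure_eq_measure2 ball_fmeasurable ennreal_less_zero_iff)

lemma mono_b: "A \<subseteq> B \<Longrightarrow> A \<in> sets M \<Longrightarrow> B \<in> sets M \<Longrightarrow> bounded B \<Longrightarrow> measure M A \<le> measure M B"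
  by (simp add: bounded_fmeasurable measure_mono_fmeasurable)

lemma dbl_pow: "r > 0 \<Longrightarrow> measure M (ball x (2^n*r)) \<le> c^n * measure M (ball x r)"
proof (induction n)
  case 0 then show ?case by simp
next
  case (Suc n)
  have "measure M (ball x (2^Suc n*r)) = measure M (ball x (2*(2^n*r)))" by (simp add: mult.assoc)
  also have "\<dots> \<le> c * measure M (ball x (2^n*r))" using dbl Suc by simp
  also have "\<dots> \<le> c * (c^n * measure M (ball x r))" using Suc c1 by (intro mult_left_mono) auto
  finally show ?case by (simp add: mult.assoc)
qed

lemma dbl_sub: assumes "r > 0" "ball x s \<subseteq> ball y (2^n*r)"
  shows "measure M (ball x s) \<le> c^n * measure M (ball y r)"
  using mono_b[OF assms(2)] dbl_pow[OF assms(1), of y n] by auto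

lemma geo_sum: "(\<Sum>i<n. e / 2^(i+2)) = e/2 - e/(2::real)^(n+1)"
  by (induction n) (auto simp: field_simps)

lemma reg_class:
  fixes D :: "'a set"
  assumes "A \<in> sets borel" and Db: "bounded D" and Do: "open D"
  shows "\<forall>e>0. \<exists>F U. closed F \<and> open U \<and> F \<subseteq> A \<and> A \<subseteq> U \<and> measure M ((U - F) \<inter> D) \<le> e"
  using assms(1) unfolding sets_borel
proof (induction rule: sigma_sets.induct)
  case (Basic U)
  then have oU: "open U" by simp
  show ?case
  proof (cases "U = UNIV")
    case True
    then show ?thesis by (intro allI impI exI[of _ UNIV]) auto
  next
    case False
    define Fn where "Fn n = {x. 1/real (Suc n) \<le> infdist x (-U)}" for n
    have clF: "closed (Fn n)" for n
      unfolding Fn_def by (intro closed_Collect_le continuous_intros)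
    have FU: "Fn n \<subseteq> U" for n
    proof
      fix x assume x: "x \<in> Fn n"
      show "x \<in> U"
      proof (rule ccontr)
        assume "x \<notin> U"
        then have "infdist x (-U) = 0" by simp
        then show False using x unfolding Fn_def by (simp add: divide_le_0_iff)
      qed
    qed
    have UF: "U \<subseteq> (\<Union>n. Fn n)"
    proof
      fix x assume "x \<in> U"
      then have "infdist x (-U) > 0"
        using oU False by (intro infdist_pos_not_in_closed) auto
      then obtain n where "1/real (Suc n) < infdist x (-U)"
        using reals_Archimedean[of "infdist x (-U)"] by (auto simp: inverse_eq_divide)
      then show "x \<in> (\<Union>n. Fn n)" unfolding Fn_def by (auto intro: less_imp_le)
    qed
    have monoF: "Fn m \<subseteq> Fn n" if "m \<le> n" for m n
    proof -
      have "1/real (Suc n) \<le> 1/real (Suc m)" using that by (simp add: frac_le)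
      then show ?thesis unfolding Fn_def by (auto intro: order_trans)
    qed
    have clsets: "Fn n \<in> sets M" for n using clF sets_M by auto
    have "(\<lambda>n. measure M ((U - Fn n) \<inter> D)) \<longlonglongrightarrow> measure M (\<Inter>n. (U - Fn n) \<inter> D)"
    proof (rule Lim_measure_decseq)
      show "range (\<lambda>n. (U - Fn n) \<inter> D) \<subseteq> sets M" using oU Do clsets by auto
      show "decseq (\<lambda>n. (U - Fn n) \<inter> D)" unfolding decseq_def using monoF by blast
      show "emeasure M ((U - Fn n) \<inter> D) \<noteq> \<infinity>" for n
      proof -
        have "(U - Fn n) \<inter> D \<in> fmeasurable M" by (rule sub_fm[OF _ _ Db]) (use oU Do clsets in auto)
        then show ?thesis by (metis fmeasurableD2 infinity_ennreal_def)
      qed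
    qed
    moreover have "(\<Inter>n. (U - Fn n) \<inter> D) = {}" using UF by auto
    ultimately have lim: "(\<lambda>n. measure M ((U - Fn n) \<inter> D)) \<longlonglongrightarrow> 0" by simp
    show ?thesis
    proof (intro allI impI)
      fix e :: real assume "e > 0"
      from order_tendstoD(2)[OF lim this] obtain n where "measure M ((U - Fn n) \<inter> D) < e"
        by (meson eventually_sequentially order_refl)
      then show "\<exists>F V. closed F \<and> open V \<and> F \<subseteq> U \<and> U \<subseteq> V \<and> measure M ((V - F) \<inter> D) \<le> e"
        using clF FU oU by (intro exI[of _ "Fn n"] exI[of _ U]) auto
    qed
  qed
next
  case Empty
  then show ?case by (intro allI impI exI[of _ "{}"]) auto
next
  case (Compl a)
  show ?case
  proof (intro allI impI)
    fix e :: real assume "e > 0"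
    from Compl.IH[rule_format, OF \<open>e > 0\<close>] obtain F U where FU: "closed F" "open U" "F \<subseteq> a" "a \<subseteq> U" "measure M ((U - F) \<inter> D) \<le> e"
      by blast
    have "((-F) - (-U)) = U - F" by auto
    then show "\<exists>F' U'. closed F' \<and> open U' \<and> F' \<subseteq> UNIV - a \<and> UNIV - a \<subseteq> U' \<and> measure M ((U' - F') \<inter> D) \<le> e"
      using FU by (intro exI[of _ "-U"] exI[of _ "-F"]) auto
  qed
next
  case (Union a)
  show ?case
  proof (intro allI impI)
    fix e :: real assume e: "e > 0"
    have ex: "\<forall>i. \<exists>p. closed (fst p) \<and> open (snd p) \<and> fst p \<subseteq> a i \<and> a i \<subseteq> snd p \<and> measure M ((snd p - fst p) \<inter> D) \<le> e / 2^(i+2)"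
    proof
      fix i
      have pos: "e / 2^(i+2) > 0" using e by simp
      from Union.IH[of i, rule_format, OF pos] obtain F U where "closed F \<and> open U \<and> F \<subseteq> a i \<and> a i \<subseteq> U \<and> measure M ((U - F) \<inter> D) \<le> e / 2^(i+2)"
        by blast
      then show "\<exists>p. closed (fst p) \<and> open (snd p) \<and> fst p \<subseteq> a i \<and> a i \<subseteq> snd p \<and> measure M ((snd p - fst p) \<inter> D) \<le> e / 2^(i+2)"
        by (intro exI[of _ "(F,U)"]) simp
    qed
    obtain p where p: "\<forall>i. closed (fst (p i)) \<and> open (snd (p i)) \<and> fst (p i) \<subseteq> a i \<and> a i \<subseteq> snd (p i) \<and> measure M ((snd (p i) - fst (p i)) \<inter> D) \<le> e / 2^(i+2)"
      using choice[OF ex] by blast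
    define F where "F i = fst (p i)" for i
    define U where "U i = snd (p i)" for i
    have FU: "\<And>i. closed (F i)" "\<And>i. open (U i)" "\<And>i. F i \<subseteq> a i" "\<And>i. a i \<subseteq> U i"
      "\<And>i. measure M ((U i - F i) \<inter> D) \<le> e / 2^(i+2)"
      using p unfolding F_def U_def by auto
    have asets: "a i \<in> sets M" for i using Union.hyps[of i] by (simp add: sets_M sets_borel)
    have FUsets: "F i \<in> sets M" "U i \<in> sets M" for i using FU sets_M by auto
    have Dsets: "D \<in> sets M" using Do by simp
    define W where "W i = (U i - F i) \<inter> D" for i
    define T where "T n = (\<Union>i<n. W i)" for n
    have Wsets: "W i \<in> sets M" for i unfolding W_def using FUsets Dsets by auto
    have fmD: "X \<in> sets M \<Longrightarrow> X \<subseteq> D \<Longrightarrow> X \<in> fmeasurable M" for X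
      using bounded_fmeasurable Db bounded_subset by blast
    have TU: "(\<Union>n. T n) = (\<Union>i. W i)"
    proof
      show "(\<Union>n. T n) \<subseteq> (\<Union>i. W i)" unfolding T_def by blast
      show "(\<Union>i. W i) \<subseteq> (\<Union>n. T n)"
      proof
        fix x assume "x \<in> (\<Union>i. W i)"
        then obtain i where "x \<in> W i" by blast
        then have "x \<in> T (Suc i)" unfolding T_def by blast
        then show "x \<in> (\<Union>n. T n)" by blast
      qed
    qed
    have WUs: "(\<Union>i. W i) \<in> sets M" using Wsets by (intro sets.countable_UN) auto
    have WD: "(\<Union>i. W i) \<subseteq> D" unfolding W_def by blast
    have "(\<lambda>n. measure M (T n)) \<longlonglongrightarrow> measure M (\<Union>n. T n)"
    proof (rule Lim_measure_incseq)
      show "range T \<subseteq> sets M" unfolding T_def using Wsets by auto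
      show "incseq T" unfolding T_def incseq_def by (intro allI impI UN_mono) auto
      have "(\<Union>n. T n) \<in> fmeasurable M"
        unfolding TU by (rule fmD[OF WUs WD])
      then show "emeasure M (\<Union>n. T n) \<noteq> \<infinity>" by (metis fmeasurableD2 infinity_ennreal_def)
    qed
    moreover have "measure M (T n) \<le> e/2" for n
    proof -
      have "measure M (T n) \<le> (\<Sum>i<n. measure M (W i))"
        unfolding T_def by (rule measure_UNION_le) (auto simp: Wsets)
      also have "\<dots> \<le> (\<Sum>i<n. e / 2^(i+2))"
        using FU(5) unfolding W_def by (intro sum_mono) auto
      also have "\<dots> \<le> e/2" using geo_sum[of e n] e by simp
      finally show ?thesis .
    qed
    ultimately have m1: "measure M (\<Union>n. T n) \<le> e/2"
      by (meson LIMSEQ_le_const2)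
    define S where "S n = (\<Union>i<n. a i) \<inter> D" for n
    have Ssets: "S n \<in> sets M" for n unfolding S_def using asets Dsets by auto
    have SU: "(\<Union>n. S n) = (\<Union>i. a i) \<inter> D"
    proof
      show "(\<Union>n. S n) \<subseteq> (\<Union>i. a i) \<inter> D" unfolding S_def by blast
      show "(\<Union>i. a i) \<inter> D \<subseteq> (\<Union>n. S n)"
      proof
        fix x assume "x \<in> (\<Union>i. a i) \<inter> D"
        then obtain i where "x \<in> a i" "x \<in> D" by blast
        then have "x \<in> S (Suc i)" unfolding S_def by blast
        then show "x \<in> (\<Union>n. S n)" by blast
      qed
    qed
    have AD: "(\<Union>i. a i) \<inter> D \<in> sets M" using asets Dsets by (intro sets.Int sets.countable_UN) auto
    have "(\<lambda>n. measure M (S n)) \<longlonglongrightarrow> measure M (\<Union>n. S n)"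
    proof (rule Lim_measure_incseq)
      show "range S \<subseteq> sets M" using Ssets by auto
      show "incseq S" unfolding S_def incseq_def by (intro allI impI Int_mono UN_mono) auto
      have "(\<Union>n. S n) \<in> fmeasurable M"
        unfolding SU by (rule fmD[OF AD]) blast
      then show "emeasure M (\<Union>n. S n) \<noteq> \<infinity>" by (metis fmeasurableD2 infinity_ennreal_def)
    qed
    then have limS: "(\<lambda>n. measure M (S n)) \<longlonglongrightarrow> measure M ((\<Union>i. a i) \<inter> D)" unfolding SU .
    have "e/2 > 0" using e by simp
    then have "measure M ((\<Union>i. a i) \<inter> D) - e/2 < measure M ((\<Union>i. a i) \<inter> D)" by simp
    from order_tendstoD(1)[OF limS this]
    obtain N where N: "measure M (S N) > measure M ((\<Union>i. a i) \<inter> D) - e/2"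
      by (meson eventually_sequentially order_refl)
    have SN: "S N \<subseteq> (\<Union>i. a i) \<inter> D" unfolding S_def by blast
    have m2: "measure M ((\<Union>i. a i) \<inter> D - S N) \<le> e/2"
    proof -
      have "measure M ((\<Union>i. a i) \<inter> D - S N) = measure M ((\<Union>i. a i) \<inter> D) - measure M (S N)"
        by (rule measure_Diff[OF _ AD Ssets SN]) (metis fmD[OF AD] Int_lower2 fmeasurableD2 infinity_ennreal_def)
      then show ?thesis using N by simp
    qed
    define F' where "F' = (\<Union>i<N. F i)"
    define U' where "U' = (\<Union>i. U i)"
    have "(U' - F') \<inter> D \<subseteq> (\<Union>n. T n) \<union> ((\<Union>i. a i) \<inter> D - S N)"
    proof
      fix x assume x: "x \<in> (U' - F') \<inter> D"
      then obtain m where m: "x \<in> U m" unfolding U'_def by auto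
      show "x \<in> (\<Union>n. T n) \<union> ((\<Union>i. a i) \<inter> D - S N)"
      proof (cases "x \<in> F m")
        case False
        then have "x \<in> T (Suc m)" using m x unfolding T_def W_def by auto
        then show ?thesis by blast
      next
        case True
        show ?thesis
        proof (cases "x \<in> S N")
          case False
          then show ?thesis using True FU(3) x by blast
        next
          case True
          then obtain j where j: "j < N" "x \<in> a j" unfolding S_def by auto
          then have "x \<notin> F j" using x unfolding F'_def by auto
          then have "x \<in> T (Suc j)" using j FU(4) x unfolding T_def W_def by auto
          then show ?thesis by blast
        qed
      qed
    qed
    moreover have "(\<Union>n. T n) \<union> ((\<Union>i. a i) \<inter> D - S N) \<in> sets M"
      using WUs AD Ssets unfolding TU by blast
    moreover have "(\<Union>n. T n) \<union> ((\<Union>i. a i) \<inter> D - S N) \<subseteq> D"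
      using WD unfolding TU by blast
    moreover have "(U' - F') \<inter> D \<in> sets M"
    proof -
      have "U' \<in> sets M" unfolding U'_def using FUsets by (intro sets.countable_UN) auto
      moreover have "F' \<in> sets M" unfolding F'_def using FUsets by auto
      ultimately show ?thesis using Dsets by blast
    qed
    ultimately have "measure M ((U' - F') \<inter> D) \<le> measure M ((\<Union>n. T n) \<union> ((\<Union>i. a i) \<inter> D - S N))"
      using measure_mono_fmeasurable fmD by metis
    also have "\<dots> \<le> measure M (\<Union>n. T n) + measure M ((\<Union>i. a i) \<inter> D - S N)"
      by (rule measure_Un_le) (use WUs AD Ssets TU in auto)
    also have "\<dots> \<le> e" using m1 m2 by simp
    finally have fin: "measure M ((U' - F') \<inter> D) \<le> e" .
    show "\<exists>F U. closed F \<and> open U \<and> F \<subseteq> (\<Union>i. a i) \<and> (\<Union>i. a i) \<subseteq> U \<and> measure M ((U - F) \<inter> D) \<le> e"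
    proof (rule exI[of _ F'], rule exI[of _ U'], intro conjI)
      show "closed F'" unfolding F'_def using FU(1) by (intro closed_UN) auto
      show "open U'" unfolding U'_def using FU(2) by (intro open_UN) auto
      show "F' \<subseteq> (\<Union>i. a i)" unfolding F'_def using FU(3) by blast
      show "(\<Union>i. a i) \<subseteq> U'" unfolding U'_def using FU(4) by blast
    qed (rule fin)
  qed
qed

lemma outer_approx:
  assumes E: "E \<in> sets M" and ED: "E \<subseteq> ball z R" and e: "e > 0"
  shows "\<exists>G. open G \<and> E \<subseteq> G \<and> G \<subseteq> ball z R \<and> measure M G \<le> measure M E + e"
proof -
  have Eb: "E \<in> sets borel" using E sets_M by simp
  have "\<exists>F U. closed F \<and> open U \<and> F \<subseteq> E \<and> E \<subseteq> U \<and> measure M ((U - F) \<inter> ball z R) \<le> e"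
    using reg_class[OF Eb bounded_ball open_ball, rule_format, OF e] .
  then obtain F U where FU: "closed F" "open U" "F \<subseteq> E" "E \<subseteq> U"
    "measure M ((U - F) \<inter> ball z R) \<le> e" by blast
  define G where "G = U \<inter> ball z R"
  have Gs: "G \<subseteq> E \<union> (U - F) \<inter> ball z R" unfolding G_def using FU(3) by blast
  have Fs: "F \<in> sets M" "U \<in> sets M" using FU(1,2) sets_M by auto
  have bb: "bounded (E \<union> (U - F) \<inter> ball z R)" using ED by (meson bounded_ball bounded_subset Int_lower2 Un_least)
  have "measure M G \<le> measure M (E \<union> (U - F) \<inter> ball z R)"
    by (rule mono_b[OF Gs _ _ bb]) (use E Fs in \<open>auto simp: G_def\<close>)
  also have "\<dots> \<le> measure M E + measure M ((U - F) \<inter> ball z R)"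
    by (rule measure_Un_le) (use E Fs in auto)
  finally have "measure M G \<le> measure M E + e" using FU(5) by linarith
  moreover have "open G" "E \<subseteq> G" "G \<subseteq> ball z R" using FU(2,4) ED by (auto simp: G_def)
  ultimately show ?thesis by blast
qed

end


lemma pow_bound:
  fixes a g t :: real assumes a: "a > 1" and g: "g > 0" and t: "0 < t" "t \<le> 1"
  shows "\<exists>k. a^k * t \<le> 1 \<and> 1/(1+g)^k \<le> (1+g) * t powr (log a (1+g))"
proof -
  define L where "L = log a (1/t)"
  define k where "k = nat \<lfloor>L\<rfloor>"
  define \<eta> where "\<eta> = log a (1+g)"
  have L0: "L \<ge> 0" unfolding L_def using a t by simp
  have kL: "real k \<le> L" unfolding k_def using L0 by linarith
  have Lk: "L < real k + 1" unfolding k_def using L0 by linarith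
  have "a^k = a powr real k" using a by (simp add: powr_realpow)
  also have "\<dots> \<le> a powr L" using a kL by simp
  also have "\<dots> = 1/t" unfolding L_def using a t by simp
  finally have h1: "a^k * t \<le> 1" using t by (simp add: field_simps)
  have ag: "a powr \<eta> = 1 + g" unfolding \<eta>_def using a g by simp
  have "(1+g) powr L = (a powr L) powr \<eta>" unfolding ag[symmetric] by (simp add: powr_powr mult.commute)
  also have "a powr L = 1/t" unfolding L_def using a t by simp
  also have "(1/t) powr \<eta> = 1 / t powr \<eta>" by (simp add: powr_divide)
  finally have e1: "(1+g) powr L = 1 / t powr \<eta>" .
  have "(1+g) powr (L - 1) = (1+g) powr L / (1+g)" using g by (simp add: powr_diff)
  also have "\<dots> = 1 / ((1+g) * t powr \<eta>)" unfolding e1 by simp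
  finally have e2: "(1+g) powr (L - 1) = 1 / ((1+g) * t powr \<eta>)" .
  have "(1+g) powr (L - 1) \<le> (1+g) powr real k" using g Lk by (intro powr_mono) auto
  also have "\<dots> = (1+g)^k" using g by (simp add: powr_realpow)
  finally have h2: "1 / ((1+g) * t powr \<eta>) \<le> (1+g)^k" using e2 by simp
  have tp: "t powr \<eta> > 0" using t by simp
  have "1/(1+g)^k \<le> (1+g) * t powr \<eta>"
  proof -
    have pos: "(1+g) * t powr \<eta> > 0" using g tp by simp
    have "1 \<le> (1+g)^k * ((1+g) * t powr \<eta>)" using h2 pos by (simp add: field_simps)
    then show ?thesis using g by (simp add: field_simps)
  qed
  then show ?thesis using h1 unfolding \<eta>_def by blast
qed

locale two = m: dbl M c + n: dbl N d
  for M :: "'a::metric_space measure" and N :: "'a measure" and c d +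
  fixes \<epsilon> \<delta> :: real
  assumes eps: "0 < \<epsilon>" "\<epsilon> < 1" and del: "0 < \<delta>" "\<delta> < 1"
    and C1: "\<And>x r E. r > 0 \<Longrightarrow> E \<in> sets M \<Longrightarrow> E \<subseteq> ball x r \<Longrightarrow>
        measure M E \<le> \<epsilon> * measure M (ball x r) \<Longrightarrow> measure N E \<le> (1 - \<delta>) * measure N (ball x r)"

locale stp = two +
  fixes U :: "'a::metric_space set" and x0 :: 'a and Rk \<rho> :: real
  assumes oU: "open U" and Ub: "U \<subseteq> ball x0 Rk" and rho: "\<rho> > 0" and Rk: "Rk > 0"
    and H: "\<And>x. x \<in> U \<Longrightarrow> measure M U \<le> \<epsilon> * measure M (ball x \<rho>)"
begin

definition "P x j \<longleftrightarrow> \<epsilon> * measure M (ball x (\<rho>/2^j)) < measure M (U \<inter> ball x (\<rho>/2^j))"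
definition "lev x = (LEAST j. P x j) - 1"
definition "rad x = \<rho> / 2^(lev x)"
definition "B x = ball x (rad x)"

lemma U_sets[simp]: "U \<in> sets M" "U \<in> sets N"
  using oU m.sets_M n.sets_M by auto

lemma Ubd: "bounded U" using Ub bounded_ball bounded_subset by blast

lemma notP0: "x \<in> U \<Longrightarrow> \<not> P x 0"
proof -
  assume x: "x \<in> U"
  have "measure M (U \<inter> ball x \<rho>) \<le> measure M U"
    by (rule m.mono_b) (use Ubd in auto)
  then show ?thesis using H[OF x] unfolding P_def by simp
qed

lemma P_ex: "x \<in> U \<Longrightarrow> \<exists>j. P x j"
proof -
  assume x: "x \<in> U"
  obtain r where r: "r > 0" "ball x r \<subseteq> U" using oU x open_contains_ball by blast
  obtain j where j: "(1/2::real)^j < r/\<rho>" using real_arch_pow_inv[of "r/\<rho>" "1/2"] r rho by auto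
  have "\<rho>/2^j < r" using j rho by (simp add: field_simps power_divide)
  then have "ball x (\<rho>/2^j) \<subseteq> U" using r by auto
  then have "U \<inter> ball x (\<rho>/2^j) = ball x (\<rho>/2^j)" by blast
  moreover have "measure M (ball x (\<rho>/2^j)) > 0" using m.ball_pos rho by simp
  ultimately have "P x j" unfolding P_def using eps by simp
  then show ?thesis ..
qed

lemma lev: assumes x: "x \<in> U" shows "\<not> P x (lev x)" "P x (Suc (lev x))"
proof -
  define L where "L = (LEAST j. P x j)"
  have PL: "P x L" unfolding L_def using P_ex[OF x] by (rule LeastI_ex)
  have L0: "L \<noteq> 0" using PL notP0[OF x] by metis
  have "Suc (lev x) = L" unfolding lev_def L_def[symmetric] using L0 by simp
  then show "P x (Suc (lev x))" using PL by simp
  have "lev x < L" unfolding lev_def L_def[symmetric] using L0 by simp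
  then show "\<not> P x (lev x)" unfolding L_def by (rule not_less_Least)
qed

lemma rad_pos[simp]: "rad x > 0" unfolding rad_def using rho by simp

lemma rad_le: "rad x \<le> \<rho>"
  unfolding rad_def using rho by (simp add: field_simps)

lemma rad_mono: "lev y \<le> lev x \<Longrightarrow> rad x \<le> rad y"
  unfolding rad_def using rho by (simp add: frac_le)

lemma B_sets[simp]: "B x \<in> sets M" "B x \<in> sets N" unfolding B_def by auto

lemma B_M: assumes x: "x \<in> U" shows "measure M (B x) \<le> (c/\<epsilon>) * measure M (U \<inter> B x)"
proof -
  define r where "r = rad x"
  have r2: "\<rho>/2^(Suc (lev x)) = r/2" unfolding r_def rad_def by simp
  have "\<epsilon> * measure M (ball x (r/2)) < measure M (U \<inter> ball x (r/2))"
    using lev(2)[OF x] unfolding P_def r2 .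
  moreover have "measure M (B x) \<le> c * measure M (ball x (r/2))"
    using m.dbl[of "r/2" x] unfolding B_def r_def by simp
  moreover have "measure M (U \<inter> ball x (r/2)) \<le> measure M (U \<inter> B x)"
  proof (rule m.mono_b)
    have "ball x (r/2) \<subseteq> B x" unfolding B_def r_def using rad_pos[of x] by (intro subset_ball) simp
    then show "U \<inter> ball x (r / 2) \<subseteq> U \<inter> B x" by blast
    show "bounded (U \<inter> B x)" using Ubd by (meson bounded_subset Int_lower1)
  qed auto
  ultimately have h: "measure M (B x) \<le> c * measure M (ball x (r/2))"
    "\<epsilon> * measure M (ball x (r/2)) \<le> measure M (U \<inter> B x)" by linarith+
  have "\<epsilon> * measure M (B x) \<le> \<epsilon> * (c * measure M (ball x (r/2)))"
    using h(1) eps by (intro mult_left_mono) auto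
  also have "\<dots> = c * (\<epsilon> * measure M (ball x (r/2)))" by simp
  also have "\<dots> \<le> c * measure M (U \<inter> B x)"
    using h(2) m.c1 by (intro mult_left_mono) auto
  finally have "\<epsilon> * measure M (B x) \<le> c * measure M (U \<inter> B x)" .
  then show ?thesis using eps by (simp add: field_simps mult.commute)
qed

lemma B_N: assumes x: "x \<in> U" shows "measure N (B x - U) \<ge> \<delta> * measure N (B x)"
proof -
  have "measure M (U \<inter> B x) \<le> \<epsilon> * measure M (B x)"
    using lev(1)[OF x] unfolding P_def B_def rad_def by simp
  then have "measure N (U \<inter> B x) \<le> (1 - \<delta>) * measure N (B x)"
    unfolding B_def by (intro C1) (auto simp: B_def)
  moreover have "measure N (B x - U) = measure N (B x) - measure N (B x \<inter> U)"
  proof -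
    have "B x - U = B x - (B x \<inter> U)" by blast
    moreover have "emeasure N (B x) \<noteq> \<infinity>"
      using n.ball_fmeasurable by (metis B_def fmeasurableD2 infinity_ennreal_def)
    ultimately show ?thesis
      by (simp only:) (rule measure_Diff, auto)
  qed
  ultimately show ?thesis by (simp add: Int_commute algebra_simps)
qed

end


context stp begin

definition "dj S \<longleftrightarrow> (\<forall>x\<in>S. \<forall>y\<in>S. x \<noteq> y \<longrightarrow> B x \<inter> B y = {})"
definition "Lv n = {x\<in>U. lev x = n}"
definition "good n A T \<longleftrightarrow> T \<subseteq> Lv n \<and> finite T \<and> dj (A \<union> T) \<and>
   (\<forall>x\<in>Lv n. x \<notin> T \<longrightarrow> (\<exists>y\<in>A \<union> T. B x \<inter> B y \<noteq> {}))"

lemma card_ceil: "real k \<le> x \<Longrightarrow> k < nat \<lceil>x\<rceil> + 1"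
proof -
  assume "real k \<le> x"
  then have "real k \<le> real_of_int \<lceil>x\<rceil>" using le_of_int_ceiling order_trans by blast
  then have "int k \<le> \<lceil>x\<rceil>" by linarith
  then have "k \<le> nat \<lceil>x\<rceil>" by (metis nat_int nat_mono)
  then show ?thesis by simp
qed

lemma x_in_B: "x \<in> B x" unfolding B_def by simp

lemma BB_sub: "y \<in> U \<Longrightarrow> ball y (3 * rad y) \<subseteq> ball x0 (Rk + 3*\<rho>)"
proof
  fix z assume y: "y \<in> U" and z: "z \<in> ball y (3 * rad y)"
  have "dist x0 y < Rk" using y Ub by auto
  moreover have "dist y z < 3 * \<rho>" using z rad_le[of y] by auto
  ultimately show "z \<in> ball x0 (Rk + 3*\<rho>)" using dist_triangle[of x0 z y] by auto
qed

lemma B_sub3: "B y \<subseteq> ball y (3 * rad y)"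
  unfolding B_def using rad_pos[of y] by (intro subset_ball) simp

lemma card_bound: "\<exists>b. \<forall>T. T \<subseteq> Lv n \<and> finite T \<and> dj T \<longrightarrow> card T < b"
proof -
  obtain q where q: "2*(Rk+\<rho>)*2^n/\<rho> < 2^q" using real_arch_pow[of "2::real" "2*(Rk+\<rho>)*2^n/\<rho>"] by auto
  have q': "2*(Rk+\<rho>) < 2^q * (\<rho>/2^n)" using q rho by (simp add: field_simps)
  define Mb where "Mb = measure M (ball x0 (Rk+\<rho>))"
  have Mb: "Mb > 0" unfolding Mb_def using Rk rho by (intro m.ball_pos) simp
  have radn: "y \<in> Lv n \<Longrightarrow> rad y = \<rho>/2^n" for y unfolding Lv_def rad_def by simp
  have lower: "Mb \<le> c^q * measure M (B y)" if y: "y \<in> Lv n" for y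
  proof -
    have yU: "y \<in> U" using y unfolding Lv_def by simp
    have "ball x0 (Rk+\<rho>) \<subseteq> ball y (2^q * (\<rho>/2^n))"
    proof
      fix z assume "z \<in> ball x0 (Rk+\<rho>)"
      then have "dist x0 z < Rk + \<rho>" by simp
      moreover have "dist y x0 < Rk" using yU Ub by (auto simp: dist_commute)
      ultimately have "dist y z < 2*(Rk+\<rho>)" using dist_triangle[of y z x0] rho by argo
      then show "z \<in> ball y (2^q * (\<rho>/2^n))" using q' by simp
    qed
    then show ?thesis unfolding Mb_def B_def radn[OF y]
      by (intro m.dbl_sub) (use rho in auto)
  qed
  have "real (card T) \<le> c^q" if T: "T \<subseteq> Lv n" "finite T" "dj T" for T
  proof -
    have sub: "B y \<subseteq> ball x0 (Rk+\<rho>)" if "y \<in> T" for y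
    proof
      fix z assume z: "z \<in> B y"
      have "y \<in> U" using that T unfolding Lv_def by auto
      then have "dist x0 y < Rk" using Ub by auto
      moreover have "dist y z < \<rho>" using z rad_le[of y] unfolding B_def by auto
      ultimately show "z \<in> ball x0 (Rk+\<rho>)" using dist_triangle[of x0 z y] by auto
    qed
    have "(\<Sum>y\<in>T. measure M (B y)) = measure M (\<Union>y\<in>T. B y)"
      using T by (intro measure_UNION'[symmetric]) (auto simp: B_def pairwise_def dj_def disjnt_def)
    also have "\<dots> \<le> Mb"
    proof -
      have "open (\<Union>y\<in>T. B y)" unfolding B_def by auto
      then show ?thesis unfolding Mb_def using sub by (intro m.mono_b) auto
    qed
    finally have s1: "(\<Sum>y\<in>T. measure M (B y)) \<le> Mb" .
    have "(\<Sum>y\<in>T. Mb / c^q) \<le> (\<Sum>y\<in>T. measure M (B y))"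
    proof (rule sum_mono)
      fix y assume "y \<in> T"
      then have "Mb \<le> c^q * measure M (B y)" using lower T by auto
      then show "Mb / c^q \<le> measure M (B y)" using m.c1 by (simp add: field_simps)
    qed
    then have "real (card T) * (Mb / c^q) \<le> Mb" using s1 by simp
    then have "real (card T) * Mb \<le> c^q * Mb" using m.c1 by (simp add: field_simps)
    then show ?thesis using Mb by simp
  qed
  then have "\<forall>T. T \<subseteq> Lv n \<and> finite T \<and> dj T \<longrightarrow> card T < nat \<lceil>c^q\<rceil> + 1"
    using card_ceil by blast
  then show ?thesis by blast
qed

lemma dj_mono: "dj S \<Longrightarrow> T \<subseteq> S \<Longrightarrow> dj T" unfolding dj_def by blast

lemma good_ex: assumes A: "dj A" shows "\<exists>T. good n A T"
proof -
  define Q where "Q T \<longleftrightarrow> T \<subseteq> Lv n \<and> finite T \<and> dj (A \<union> T)" for T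
  obtain b where b: "\<forall>T. T \<subseteq> Lv n \<and> finite T \<and> dj T \<longrightarrow> card T < b" using card_bound by blast
  have "Q {}" unfolding Q_def using A by simp
  moreover have "\<forall>T. Q T \<longrightarrow> card T < b" unfolding Q_def using b dj_mono by blast
  ultimately obtain T where T: "Q T" and Tmax: "\<forall>T'. Q T' \<longrightarrow> card T' \<le> card T"
    using Lattices_Big.ex_has_greatest_nat[of Q "{}" card b] by blast
  have "good n A T" unfolding good_def
  proof (intro conjI ballI impI)
    show "T \<subseteq> Lv n" "finite T" "dj (A \<union> T)" using T unfolding Q_def by auto
    fix x assume x: "x \<in> Lv n" "x \<notin> T"
    show "\<exists>y\<in>A \<union> T. B x \<inter> B y \<noteq> {}"
    proof (rule ccontr)
      assume "\<not> (\<exists>y\<in>A \<union> T. B x \<inter> B y \<noteq> {})"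
      then have nx: "\<forall>y\<in>A \<union> T. B x \<inter> B y = {}" by blast
      then have "x \<notin> A \<union> T" using x_in_B[of x] by blast
      have "dj (A \<union> insert x T)"
        using T nx unfolding Q_def dj_def by (auto simp: Int_commute)
      then have "Q (insert x T)" using T x unfolding Q_def by auto
      then have "card (insert x T) \<le> card T" using Tmax by blast
      moreover have "card (insert x T) = Suc (card T)" using T x unfolding Q_def by simp
      ultimately show False by simp
    qed
  qed
  then show ?thesis ..
qed

primrec acc :: "nat \<Rightarrow> 'a set" where
  "acc 0 = {}"
| "acc (Suc n) = acc n \<union> (SOME T. good n (acc n) T)"

lemma acc_props: "dj (acc n) \<and> finite (acc n) \<and> acc n \<subseteq> U \<and> (\<forall>x\<in>acc n. lev x < n)"
proof (induction n)
  case 0 then show ?case by (simp add: dj_def)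
next
  case (Suc n)
  define T where "T = (SOME T. good n (acc n) T)"
  have accS: "acc (Suc n) = acc n \<union> T" by (simp add: T_def)
  have "good n (acc n) T" unfolding T_def using good_ex Suc by (metis someI_ex)
  then have g: "T \<subseteq> U" "\<forall>x\<in>T. lev x = n" "finite T" "dj (acc n \<union> T)" unfolding good_def Lv_def by auto
  show ?case unfolding accS using Suc g by auto
qed

lemma acc_good: "good n (acc n) (acc (Suc n) - acc n) \<or> True" by simp

lemma acc_cover: assumes x: "x \<in> U" shows "\<exists>y\<in>acc (Suc (lev x)). B x \<inter> B y \<noteq> {}"
proof -
  define n where "n = lev x"
  define T where "T = (SOME T. good n (acc n) T)"
  have g: "good n (acc n) T" unfolding T_def using good_ex acc_props by (metis someI_ex)
  have accS: "acc (Suc n) = acc n \<union> T" by (simp add: T_def)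
  have xL: "x \<in> Lv n" unfolding Lv_def n_def using x by simp
  show ?thesis
  proof (cases "x \<in> T")
    case True
    then have "x \<in> acc (Suc n)" unfolding accS by simp
    then show ?thesis using x_in_B[of x] unfolding n_def by blast
  next
    case False
    then obtain y where "y \<in> acc n \<union> T" "B x \<inter> B y \<noteq> {}" using g xL unfolding good_def by blast
    then show ?thesis unfolding n_def[symmetric] accS by blast
  qed
qed

lemma acc_cover3: assumes x: "x \<in> U" shows "\<exists>y\<in>acc (Suc (lev x)). B x \<subseteq> ball y (3 * rad y)"
proof -
  obtain y where y: "y \<in> acc (Suc (lev x))" "B x \<inter> B y \<noteq> {}" using acc_cover[OF x] by blast
  have "\<forall>z\<in>acc (Suc (lev x)). lev z < Suc (lev x)" using acc_props by blast
  then have "lev y < Suc (lev x)" using y(1) by blast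
  then have "lev y \<le> lev x" by simp
  then have r: "rad x \<le> rad y" by (rule rad_mono)
  obtain w where w: "w \<in> B x" "w \<in> B y" using y(2) by blast
  have "B x \<subseteq> ball y (3 * rad y)"
  proof
    fix z assume z: "z \<in> B x"
    have "dist y z \<le> dist y w + dist w x + dist x z"
      using dist_triangle[of y z w] dist_triangle[of w z x] by linarith
    moreover have "dist y w < rad y" using w unfolding B_def by simp
    moreover have "dist w x < rad x" using w unfolding B_def by (simp add: dist_commute)
    moreover have "dist x z < rad x" using z unfolding B_def by simp
    ultimately show "z \<in> ball y (3 * rad y)" using r by simp
  qed
  then show ?thesis using y by blast
qed

lemma acc_mono: "m \<le> n \<Longrightarrow> acc m \<subseteq> acc n"
  by (induction n) (auto simp: le_Suc_eq)

end


context stp begin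

definition "Vn n = (\<Union>y\<in>acc n. ball y (3 * rad y))"
definition "V = (\<Union>n. Vn n)"

lemma Vn_open: "open (Vn n)" unfolding Vn_def by auto
lemma V_open: "open V" unfolding V_def using Vn_open by auto
lemma Vn_sub: "Vn n \<subseteq> ball x0 (Rk + 3*\<rho>)"
  unfolding Vn_def using BB_sub acc_props by blast
lemma V_sub: "V \<subseteq> ball x0 (Rk + 3*\<rho>)" unfolding V_def using Vn_sub by blast
lemma V_bd: "bounded V" using V_sub bounded_ball bounded_subset by blast
lemma Vn_bd: "bounded (Vn n)" using Vn_sub bounded_ball bounded_subset by blast
lemma U_V: "U \<subseteq> V"
proof
  fix x assume x: "x \<in> U"
  obtain y where y: "y \<in> acc (Suc (lev x))" "B x \<subseteq> ball y (3 * rad y)" using acc_cover3[OF x] by blast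
  then have "x \<in> Vn (Suc (lev x))" unfolding Vn_def using x_in_B[of x] by blast
  then show "x \<in> V" unfolding V_def by blast
qed
lemma Vn_inc: "incseq Vn"
  unfolding incseq_def Vn_def using acc_mono by blast

lemma Vn_M: "measure M (Vn n) \<le> (c^3/\<epsilon>) * measure M U"
proof -
  define A where "A = acc n"
  have A: "finite A" "dj A" "A \<subseteq> U" unfolding A_def using acc_props by auto
  have "measure M (Vn n) \<le> (\<Sum>y\<in>A. measure M (ball y (3 * rad y)))"
    unfolding Vn_def A_def[symmetric] by (rule measure_UNION_le) (use A in auto)
  also have "\<dots> \<le> (\<Sum>y\<in>A. c^2 * ((c/\<epsilon>) * measure M (U \<inter> B y)))"
  proof (rule sum_mono)
    fix y assume y: "y \<in> A"
    have "ball y (3 * rad y) \<subseteq> ball y (2^2 * rad y)" using rad_pos[of y] by (intro subset_ball) simp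
    then have "measure M (ball y (3 * rad y)) \<le> c^2 * measure M (B y)"
      unfolding B_def by (rule m.dbl_sub[OF rad_pos])
    also have "\<dots> \<le> c^2 * ((c/\<epsilon>) * measure M (U \<inter> B y))"
      using B_M[of y] y A by (intro mult_left_mono) auto
    finally show "measure M (ball y (3 * rad y)) \<le> c^2 * ((c/\<epsilon>) * measure M (U \<inter> B y))" .
  qed
  also have "\<dots> = (c^3/\<epsilon>) * (\<Sum>y\<in>A. measure M (U \<inter> B y))"
    unfolding sum_distrib_left by (intro sum.cong refl) (simp add: algebra_simps power2_eq_square power3_eq_cube)
  also have "(\<Sum>y\<in>A. measure M (U \<inter> B y)) = measure M (\<Union>y\<in>A. U \<inter> B y)"
  proof (rule measure_UNION'[symmetric])
    show "finite A" using A by simp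
    show "U \<inter> B y \<in> fmeasurable M" if "y \<in> A" for y
      by (rule m.sub_fm[OF _ _ Ubd]) (auto simp: B_def)
    show "pairwise (\<lambda>i j. disjnt (U \<inter> B i) (U \<inter> B j)) A"
      using A unfolding pairwise_def dj_def disjnt_def by blast
  qed
  also have "(c^3/\<epsilon>) * measure M (\<Union>y\<in>A. U \<inter> B y) \<le> (c^3/\<epsilon>) * measure M U"
  proof (rule mult_left_mono)
    have "open (\<Union>y\<in>A. U \<inter> B y)" using oU by (auto simp: B_def)
    then show "measure M (\<Union>y\<in>A. U \<inter> B y) \<le> measure M U"
      by (intro m.mono_b) (use Ubd in auto)
    show "0 \<le> c^3/\<epsilon>" using m.c1 eps by simp
  qed
  finally show ?thesis .
qed

lemma V_M: "measure M V \<le> (c^3/\<epsilon>) * measure M U"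
proof -
  have "(\<lambda>n. measure M (Vn n)) \<longlonglongrightarrow> measure M (\<Union>n. Vn n)"
  proof (rule Lim_measure_incseq)
    show "range Vn \<subseteq> sets M" using Vn_open by auto
    show "incseq Vn" by (rule Vn_inc)
    have "(\<Union>n. Vn n) \<in> fmeasurable M" using m.bounded_fmeasurable V_bd V_open unfolding V_def by auto
    then show "emeasure M (\<Union>n. Vn n) \<noteq> \<infinity>" by (metis fmeasurableD2 infinity_ennreal_def)
  qed
  then show ?thesis unfolding V_def using Vn_M by (meson LIMSEQ_le_const2)
qed

lemma Vn_N: "measure N U + (\<delta>/d^2) * measure N (U \<inter> Vn n) \<le> measure N V"
proof -
  define A where "A = acc n"
  have A: "finite A" "dj A" "A \<subseteq> U" unfolding A_def using acc_props by auto
  define W where "W = (\<Union>y\<in>A. B y)"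
  have Wsets: "W \<in> sets N" unfolding W_def B_def by auto
  have WV: "W \<subseteq> V"
  proof -
    have "W \<subseteq> Vn n" unfolding W_def Vn_def A_def using B_sub3 by blast
    then show ?thesis unfolding V_def by blast
  qed
  have Vfm: "V \<in> fmeasurable N" using n.bounded_fmeasurable V_bd V_open by auto
  have fmN: "X \<in> sets N \<Longrightarrow> X \<subseteq> V \<Longrightarrow> X \<in> fmeasurable N" for X
    using n.sub_fm V_bd by blast
  have "measure N (U \<inter> Vn n) \<le> measure N (Vn n)"
    by (rule n.mono_b) (auto simp: Vn_open Vn_bd)
  also have "\<dots> \<le> (\<Sum>y\<in>A. measure N (ball y (3 * rad y)))"
    unfolding Vn_def A_def[symmetric] by (rule measure_UNION_le) (use A in auto)
  also have "\<dots> \<le> (\<Sum>y\<in>A. d^2 * ((1/\<delta>) * measure N (B y - U)))"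
  proof (rule sum_mono)
    fix y assume y: "y \<in> A"
    have "ball y (3 * rad y) \<subseteq> ball y (2^2 * rad y)" using rad_pos[of y] by (intro subset_ball) simp
    then have "measure N (ball y (3 * rad y)) \<le> d^2 * measure N (B y)"
      unfolding B_def by (rule n.dbl_sub[OF rad_pos])
    also have "\<dots> \<le> d^2 * ((1/\<delta>) * measure N (B y - U))"
    proof (rule mult_left_mono)
      have "\<delta> * measure N (B y) \<le> measure N (B y - U)" using B_N[of y] y A by auto
      then show "measure N (B y) \<le> (1/\<delta>) * measure N (B y - U)" using del by (simp add: field_simps)
    qed simp
    finally show "measure N (ball y (3 * rad y)) \<le> d^2 * ((1/\<delta>) * measure N (B y - U))" .
  qed
  also have "\<dots> = (d^2/\<delta>) * (\<Sum>y\<in>A. measure N (B y - U))"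
    by (simp add: sum_distrib_left)
  also have "(\<Sum>y\<in>A. measure N (B y - U)) = measure N (\<Union>y\<in>A. B y - U)"
  proof (rule measure_UNION'[symmetric])
    show "finite A" using A by simp
    show "B y - U \<in> fmeasurable N" if "y \<in> A" for y
    proof (rule fmN)
      show "B y - U \<in> sets N" by auto
      show "B y - U \<subseteq> V" using WV that unfolding W_def by blast
    qed
    show "pairwise (\<lambda>i j. disjnt (B i - U) (B j - U)) A"
      using A unfolding pairwise_def dj_def disjnt_def by blast
  qed
  also have "(\<Union>y\<in>A. B y - U) = W - U" unfolding W_def by blast
  finally have h1: "measure N (U \<inter> Vn n) \<le> (d^2/\<delta>) * measure N (W - U)" .
  have dpos: "d^2 > 0" using n.c1 by simp
  have h2: "(\<delta>/d^2) * measure N (U \<inter> Vn n) \<le> measure N (W - U)"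
  proof -
    have "(\<delta>/d^2) * measure N (U \<inter> Vn n) \<le> (\<delta>/d^2) * ((d^2/\<delta>) * measure N (W - U))"
      using h1 del dpos by (intro mult_left_mono) auto
    also have "\<dots> = measure N (W - U)" using del dpos by simp
    finally show ?thesis .
  qed
  have "measure N U + measure N (W - U) = measure N (U \<union> (W - U))"
  proof (rule measure_Union[symmetric])
    have "U \<in> fmeasurable N" "W - U \<in> fmeasurable N" using fmN[of U] fmN[of "W - U"] U_V WV Wsets by auto
    then show "emeasure N U \<noteq> \<infinity>" "emeasure N (W - U) \<noteq> \<infinity>"
      by (metis fmeasurableD2 infinity_ennreal_def)+
  qed (use Wsets in auto)
  also have "\<dots> \<le> measure N V"
    by (rule measure_mono_fmeasurable) (use U_V WV Wsets Vfm in auto)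
  finally show ?thesis using h2 by linarith
qed

lemma V_N: "(1 + \<delta>/d^2) * measure N U \<le> measure N V"
proof -
  have "(\<lambda>n. measure N (U \<inter> Vn n)) \<longlonglongrightarrow> measure N (\<Union>n. U \<inter> Vn n)"
  proof (rule Lim_measure_incseq)
    show "range (\<lambda>n. U \<inter> Vn n) \<subseteq> sets N" using Vn_open by auto
    show "incseq (\<lambda>n. U \<inter> Vn n)" using Vn_inc unfolding incseq_def by blast
    have "open (\<Union>n. U \<inter> Vn n)" using Vn_open oU by auto
    then have "(\<Union>n. U \<inter> Vn n) \<in> fmeasurable N"
      by (intro n.sub_fm[OF _ _ V_bd]) (auto simp: V_def)
    then show "emeasure N (\<Union>n. U \<inter> Vn n) \<noteq> \<infinity>" by (metis fmeasurableD2 infinity_ennreal_def)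
  qed
  moreover have "(\<Union>n. U \<inter> Vn n) = U" using U_V unfolding V_def by blast
  ultimately have "(\<lambda>n. measure N (U \<inter> Vn n)) \<longlonglongrightarrow> measure N U" by simp
  then have "(\<lambda>n. measure N U + (\<delta>/d^2) * measure N (U \<inter> Vn n)) \<longlonglongrightarrow> measure N U + (\<delta>/d^2) * measure N U"
    by (intro tendsto_intros)
  then have "measure N U + (\<delta>/d^2) * measure N U \<le> measure N V"
    using Vn_N by (meson LIMSEQ_le_const2)
  then show ?thesis by (simp add: algebra_simps)
qed

lemma step_result: "\<exists>V. open V \<and> U \<subseteq> V \<and> V \<subseteq> ball x0 (Rk + 3*\<rho>) \<and>
   measure M V \<le> (c^3/\<epsilon>) * measure M U \<and> (1 + \<delta>/d^2) * measure N U \<le> measure N V"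
  using V_open U_V V_sub V_M V_N by blast

end


context two begin

lemma step:
  assumes "open U" "U \<subseteq> ball x0 Rk" "\<rho> > 0" "Rk > 0"
    and "\<And>x. x \<in> U \<Longrightarrow> measure M U \<le> \<epsilon> * measure M (ball x \<rho>)"
  shows "\<exists>V. open V \<and> U \<subseteq> V \<and> V \<subseteq> ball x0 (Rk + 3*\<rho>) \<and>
   measure M V \<le> (c^3/\<epsilon>) * measure M U \<and> (1 + \<delta>/d^2) * measure N U \<le> measure N V"
proof -
  have "stp M N c d \<epsilon> \<delta> U x0 Rk \<rho>"
    by (intro stp.intro stp_axioms.intro two.intro m.dbl_axioms n.dbl_axioms two_axioms) (use assms in auto)
  then show ?thesis by (rule stp.step_result)
qed

end


context two begin

definition "K = c^3/\<epsilon>"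
definition "a = K * c"
definition "\<gamma> = \<delta>/d^2"

lemma K_ge1: "K \<ge> 1"
proof -
  have "c^3 \<ge> 1" using m.c1 by simp
  then have "c^3/\<epsilon> \<ge> 1/\<epsilon>" using eps by (simp add: divide_right_mono)
  moreover have "1/\<epsilon> \<ge> 1" using eps by simp
  ultimately show ?thesis unfolding K_def by linarith
qed

lemma a_ge1: "a \<ge> 1" unfolding a_def using K_ge1 m.c1
  by (metis mult_mono' mult_1 zero_le_one)

lemma gam_pos: "\<gamma> > 0" unfolding \<gamma>_def using del n.c1 by simp

lemma iter:
  assumes G: "open G" "G \<subseteq> ball x0 R" "R > 0" "measure M G \<le> s * measure M (ball x0 R)"
  shows "a^k * c^3 * s \<le> \<epsilon> \<Longrightarrow> \<exists>V. open V \<and> G \<subseteq> V \<and> V \<subseteq> ball x0 (7*R - 6*R/2^k) \<and>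
      measure M V \<le> K^k * measure M G \<and> (1+\<gamma>)^k * measure N G \<le> measure N V"
proof (induction k)
  case 0
  have "ball x0 R \<subseteq> ball x0 (7*R - 6*R/2^0)" by (intro subset_ball) simp
  then show ?case using G by (intro exI[of _ G]) auto
next
  case (Suc j)
  have sp: "s \<ge> 0"
  proof -
    have "0 \<le> measure M G" by simp
    then have "0 \<le> s * measure M (ball x0 R)" using G(4) by linarith
    moreover have "measure M (ball x0 R) > 0" using G(3) m.ball_pos by simp
    ultimately show ?thesis by (simp add: zero_le_mult_iff)
  qed
  have c3: "c^3 \<ge> 0" using m.c1 by simp
  have "a^j * c^3 * s \<le> a^(Suc j) * c^3 * s"
    using a_ge1 sp c3 by (intro mult_right_mono) (auto intro: power_increasing)
  then have hj: "a^j * c^3 * s \<le> \<epsilon>" using Suc.prems by linarith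
  obtain V where V: "open V" "G \<subseteq> V" "V \<subseteq> ball x0 (7*R - 6*R/2^j)"
    "measure M V \<le> K^j * measure M G" "(1+\<gamma>)^j * measure N G \<le> measure N V"
    using Suc.IH[OF hj] by blast
  define \<rho> where "\<rho> = R/2^j"
  have rho: "\<rho> > 0" unfolding \<rho>_def using G by simp
  have Rkpos: "7*R - 6*R/2^j > 0"
  proof -
    have "6*R/2^j \<le> 6*R" using G(3) by (simp add: field_simps)
    then show ?thesis using G(3) by linarith
  qed
  have hyp: "measure M V \<le> \<epsilon> * measure M (ball x \<rho>)" if x: "x \<in> V" for x
  proof -
    have dx: "dist x0 x < 7*R"
    proof -
      have "dist x0 x < 7*R - 6*R/2^j" using x V(3) by auto
      moreover have "6*R/2^j \<ge> 0" using G(3) by simp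
      ultimately show ?thesis by linarith
    qed
    have "ball x0 R \<subseteq> ball x (2^(j+3) * \<rho>)"
    proof
      fix z assume "z \<in> ball x0 R"
      then have "dist x z < 8*R" using dx dist_triangle[of x z x0] by (simp add: dist_commute)
      moreover have "2^(j+3) * \<rho> = 8*R" unfolding \<rho>_def by (simp add: power_add)
      ultimately show "z \<in> ball x (2^(j+3) * \<rho>)" by simp
    qed
    then have bx: "measure M (ball x0 R) \<le> c^(j+3) * measure M (ball x \<rho>)"
      by (intro m.dbl_sub[OF rho])
    have "measure M V \<le> K^j * (s * measure M (ball x0 R))"
      using V(4) G(4) K_ge1 by (smt (verit) mult_left_mono zero_le_power)
    also have "\<dots> \<le> K^j * (s * (c^(j+3) * measure M (ball x \<rho>)))"
      using bx sp K_ge1 by (intro mult_left_mono) auto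
    also have "\<dots> = (a^j * c^3 * s) * measure M (ball x \<rho>)"
      unfolding a_def by (simp add: power_mult_distrib power_add algebra_simps)
    also have "\<dots> \<le> \<epsilon> * measure M (ball x \<rho>)"
      using hj by (intro mult_right_mono) auto
    finally show ?thesis .
  qed
  obtain V' where V': "open V'" "V \<subseteq> V'" "V' \<subseteq> ball x0 ((7*R - 6*R/2^j) + 3*\<rho>)"
    "measure M V' \<le> (c^3/\<epsilon>) * measure M V" "(1 + \<delta>/d^2) * measure N V \<le> measure N V'"
    using step[OF V(1) V(3) rho Rkpos hyp] by blast
  have rr: "(7*R - 6*R/2^j) + 3*\<rho> = 7*R - 6*R/2^(Suc j)" unfolding \<rho>_def by (simp add: field_simps)
  have "measure M V' \<le> K * (K^j * measure M G)"
    using V'(4) V(4) K_ge1 unfolding K_def[symmetric] by (smt (verit) mult_left_mono)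
  moreover have "(1+\<gamma>)^(Suc j) * measure N G \<le> measure N V'"
  proof -
    have "(1+\<gamma>)^(Suc j) * measure N G = (1+\<gamma>) * ((1+\<gamma>)^j * measure N G)" by simp
    also have "\<dots> \<le> (1+\<gamma>) * measure N V" using V(5) gam_pos by (intro mult_left_mono) auto
    also have "\<dots> \<le> measure N V'" using V'(5) unfolding \<gamma>_def .
    finally show ?thesis .
  qed
  ultimately show ?case using V V' rr by (intro exI[of _ V']) auto
qed

end


context two begin

lemma a_gt1: "a > 1"
proof -
  have "c^3 \<ge> 1" using m.c1 by simp
  then have "c^3/\<epsilon> \<ge> 1/\<epsilon>" using eps by (simp add: divide_right_mono)
  moreover have "1/\<epsilon> > 1" using eps by simp
  ultimately have "K > 1" unfolding K_def by linarith
  moreover have "K * 1 \<le> K * c" using m.c1 \<open>K > 1\<close> by (intro mult_left_mono) auto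
  ultimately show ?thesis unfolding a_def by linarith
qed

definition "\<eta> = log a (1+\<gamma>)"
definition "C0 = d^3 * (1+\<gamma>) * (c^3/\<epsilon>) powr \<eta>"

lemma eta_pos: "\<eta> > 0" unfolding \<eta>_def using a_gt1 gam_pos by simp

lemma core:
  assumes E: "E \<in> sets M" "E \<subseteq> ball x0 R" and R: "R > 0" and s: "s > 0"
    and Es: "measure M E < s * measure M (ball x0 R)" and k: "a^k * c^3 * s \<le> \<epsilon>"
  shows "measure N E * (1+\<gamma>)^k \<le> d^3 * measure N (ball x0 R)"
proof -
  have "0 < s * measure M (ball x0 R) - measure M E" using Es by simp
  from m.outer_approx[OF E this] obtain G where G: "open G" "E \<subseteq> G" "G \<subseteq> ball x0 R"
    "measure M G \<le> measure M E + (s * measure M (ball x0 R) - measure M E)" by blast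
  then have G4: "measure M G \<le> s * measure M (ball x0 R)" by simp
  obtain V where V: "open V" "G \<subseteq> V" "V \<subseteq> ball x0 (7*R - 6*R/2^k)"
      "(1+\<gamma>)^k * measure N G \<le> measure N V"
    using iter[OF G(1) G(3) R G4 k] by blast
  have "measure N E \<le> measure N G"
    by (rule n.mono_b) (use E G n.sets_M m.sets_M in \<open>auto intro: bounded_subset[OF bounded_ball]\<close>)
  then have "measure N E * (1+\<gamma>)^k \<le> (1+\<gamma>)^k * measure N G"
    using gam_pos by (simp add: mult.commute mult_left_mono)
  also have "\<dots> \<le> measure N V" using V(4) .
  also have "\<dots> \<le> measure N (ball x0 (2^3 * R))"
  proof (rule n.mono_b)
    have "7*R - 6*R/2^k \<le> 2^3 * R" using R by (simp add: field_simps)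
    then show "V \<subseteq> ball x0 (2^3 * R)" using V(3) by (meson order_trans subset_ball)
  qed (use V in auto)
  also have "\<dots> \<le> d^3 * measure N (ball x0 R)"
    by (rule n.dbl_pow[OF R])
  finally show ?thesis .
qed

lemma bound_s:
  assumes E: "E \<in> sets M" "E \<subseteq> ball x0 R" and R: "R > 0" and s: "s > 0"
    and Es: "measure M E < s * measure M (ball x0 R)"
  shows "measure N E \<le> C0 * measure N (ball x0 R) * s powr \<eta>"
proof -
  define t where "t = (c^3/\<epsilon>) * s"
  have tpos: "t > 0" unfolding t_def using s eps m.c1 by simp
  have tp: "t powr \<eta> = (c^3/\<epsilon>) powr \<eta> * s powr \<eta>" unfolding t_def by (rule powr_mult)
  have C0t: "C0 * measure N (ball x0 R) * s powr \<eta> = d^3 * (1+\<gamma>) * measure N (ball x0 R) * t powr \<eta>"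
    unfolding C0_def tp by (simp add: algebra_simps)
  have Nb: "measure N (ball x0 R) \<ge> 0" by simp
  have d3: "d^3 \<ge> 1" using n.c1 by simp
  show ?thesis
  proof (cases "t \<le> 1")
    case True
    obtain k where k: "a^k * t \<le> 1" "1/(1+\<gamma>)^k \<le> (1+\<gamma>) * t powr \<eta>"
      using pow_bound[OF a_gt1 gam_pos tpos True] unfolding \<eta>_def by blast
    have "a^k * c^3 * s \<le> \<epsilon>"
    proof -
      have "a^k * c^3 * s = \<epsilon> * (a^k * t)" unfolding t_def using eps by simp
      also have "\<dots> \<le> \<epsilon> * 1" using k(1) eps by (intro mult_left_mono) auto
      finally show ?thesis by simp
    qed
    from core[OF E R s Es this] have h: "measure N E * (1+\<gamma>)^k \<le> d^3 * measure N (ball x0 R)" .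
    have gk: "(1+\<gamma>)^k > 0" using gam_pos by simp
    have "measure N E \<le> d^3 * measure N (ball x0 R) * (1/(1+\<gamma>)^k)"
      using h gk by (simp add: field_simps)
    also have "\<dots> \<le> d^3 * measure N (ball x0 R) * ((1+\<gamma>) * t powr \<eta>)"
    proof (rule mult_left_mono[OF k(2)])
      have "0 \<le> d^3" using d3 by linarith
      then show "0 \<le> d^3 * measure N (ball x0 R)" using Nb by (rule mult_nonneg_nonneg)
    qed
    finally show ?thesis unfolding C0t by (simp only: mult_ac)
  next
    case False
    have t1: "t powr \<eta> \<ge> 1" using False eta_pos by (intro ge_one_powr_ge_zero) auto
    have "measure N E \<le> measure N (ball x0 R)"
      by (rule n.mono_b) (use E m.sets_M n.sets_M in auto)
    also have "\<dots> \<le> (d^3 * (1+\<gamma>) * t powr \<eta>) * measure N (ball x0 R)"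
    proof -
      have o1: "1 * 1 \<le> d^3 * (1+\<gamma>)" by (rule mult_mono) (use d3 gam_pos n.c1 in auto)
      have "d^3 * (1+\<gamma>) * 1 \<le> d^3 * (1+\<gamma>) * t powr \<eta>" by (rule mult_left_mono) (use t1 o1 in auto)
      then have "1 \<le> d^3 * (1+\<gamma>) * t powr \<eta>" using o1 by linarith
      from mult_right_mono[OF this Nb] show ?thesis by simp
    qed
    finally show ?thesis unfolding C0t by (simp only: mult_ac)
  qed
qed

end


context two begin

lemma C0_pos: "C0 > 0"
  unfolding C0_def using n.c1 gam_pos m.c1 eps by simp

lemma cond2_two: "\<exists>C p. C > 0 \<and> p \<ge> 1 \<and> (\<forall>x r E. r > 0 \<longrightarrow> E \<in> sets M \<longrightarrow> E \<subseteq> ball x r \<longrightarrow>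
        measure N E \<le> C * measure N (ball x r) * (measure M E / measure M (ball x r)) powr (1 / p))"
proof (intro exI conjI allI impI)
  define \<eta>' where "\<eta>' = min \<eta> 1"
  have e': "\<eta>' > 0" "\<eta>' \<le> 1" "\<eta>' \<le> \<eta>" unfolding \<eta>'_def using eta_pos by auto
  show "C0 * 2 powr \<eta> > 0" using C0_pos by simp
  show "1/\<eta>' \<ge> 1" using e' by simp
  fix x r E assume r: "r > 0" and E: "E \<in> sets M" "E \<subseteq> ball x r"
  have pp: "1 / (1/\<eta>') = \<eta>'" by simp
  define t where "t = measure M E / measure M (ball x r)"
  have mB: "measure M (ball x r) > 0" using m.ball_pos[OF r] .
  have mEB: "measure M E \<le> measure M (ball x r)" by (rule m.mono_b) (use E in auto)
  have t01: "0 \<le> t" "t \<le> 1" unfolding t_def using mB mEB by auto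
  have Nb: "measure N (ball x r) \<ge> 0" by simp
  show "measure N E \<le> C0 * 2 powr \<eta> * measure N (ball x r) * (measure M E / measure M (ball x r)) powr (1 / (1/\<eta>'))"
  proof (cases "t > 0")
    case True
    have "measure M E < (2*t) * measure M (ball x r)"
      using True mB unfolding t_def by (simp add: field_simps)
    from bound_s[OF E r _ this] True
    have "measure N E \<le> C0 * measure N (ball x r) * (2*t) powr \<eta>" by simp
    also have "\<dots> = (C0 * 2 powr \<eta> * measure N (ball x r)) * t powr \<eta>"
      by (simp add: powr_mult mult_ac)
    also have "\<dots> \<le> (C0 * 2 powr \<eta> * measure N (ball x r)) * t powr \<eta>'"
      using C0_pos Nb t01 e' by (intro mult_left_mono powr_mono') auto
    finally show ?thesis unfolding pp t_def[symmetric] .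
  next
    case False
    then have t0: "t = 0" using t01 by simp
    then have mE: "measure M E = 0" unfolding t_def using mB by simp
    have "measure N E = 0"
    proof (rule ccontr)
      assume "measure N E \<noteq> 0"
      then have pos: "measure N E > 0" using measure_nonneg[of N E] by linarith
      define X where "X = C0 * measure N (ball x r) + 1"
      have "C0 * measure N (ball x r) \<ge> 0" using C0_pos Nb by simp
      then have X: "X > 0" "X \<ge> C0 * measure N (ball x r)" unfolding X_def by auto
      define y where "y = measure N E / (2 * X)"
      have y: "y > 0" unfolding y_def using pos X by simp
      define s where "s = y powr (1/\<eta>)"
      have s: "s > 0" unfolding s_def using y by simp
      have sy: "s powr \<eta> = y" unfolding s_def using y eta_pos by (simp add: powr_powr)
      have "measure M E < s * measure M (ball x r)" using mE s mB by simp
      from bound_s[OF E r s this]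
      have "measure N E \<le> C0 * measure N (ball x r) * y" unfolding sy .
      also have "\<dots> \<le> X * y" using X y by (intro mult_right_mono) auto
      also have "\<dots> = measure N E / 2" unfolding y_def using X by simp
      finally show False using pos by simp
    qed
    then show ?thesis using C0_pos Nb unfolding pp t_def[symmetric] by simp
  qed
qed

end


lemma dbl_of: assumes "doubling_measure M" shows "\<exists>c. dbl M c"
proof -
  from assms obtain c where bm: "ball_measure M" and c: "\<forall>x r. r > 0 \<longrightarrow> measure M (ball x (2 * r)) \<le> c * measure M (ball x r)"
    unfolding doubling_measure_def by blast
  have "dbl M (max c 1)"
  proof
    show "sets M = sets borel" using bm unfolding ball_measure_def by blast
    show "0 < emeasure M (ball x r)" "emeasure M (ball x r) < \<infinity>" if "r > 0" for x r
      using bm that unfolding ball_measure_def by auto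
    show "1 \<le> max c 1" by simp
    show "measure M (ball x (2 * r)) \<le> max c 1 * measure M (ball x r)" if "r > 0" for x r
    proof -
      have "c * measure M (ball x r) \<le> max c 1 * measure M (ball x r)"
        by (intro mult_right_mono) auto
      moreover have "measure M (ball x (2 * r)) \<le> c * measure M (ball x r)" using c that by blast
      ultimately show ?thesis by linarith
    qed
  qed
  then show ?thesis by blast
qed

lemma L12:
  assumes "doubling_measure M" "doubling_measure N" "cond1 M N"
  shows "cond2 M N"
proof -
  obtain c where c: "dbl M c" using dbl_of assms(1) by blast
  obtain d where d: "dbl N d" using dbl_of assms(2) by blast
  obtain \<epsilon> \<delta> :: real where ed: "0 < \<epsilon>" "\<epsilon> < 1" "0 < \<delta>" "\<delta> < 1"
     and C1: "\<forall>x r E. r > 0 \<longrightarrow> E \<in> sets M \<longrightarrow> E \<subseteq> ball x r \<longrightarrow>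
        measure M E \<le> \<epsilon> * measure M (ball x r) \<longrightarrow>
        measure N E \<le> (1 - \<delta>) * measure N (ball x r)"
    using assms(3) unfolding cond1_def by blast
  have "two M N c d \<epsilon> \<delta>"
    by (intro two.intro two_axioms.intro c d) (use ed C1 in auto)
  from two.cond2_two[OF this] show ?thesis unfolding cond2_def .
qed

lemma swap21:
  assumes "doubling_measure M" "doubling_measure N" "cond2 M N"
  shows "cond1 N M"
proof -
  obtain c where c: "dbl M c" using dbl_of assms(1) by blast
  obtain d where d: "dbl N d" using dbl_of assms(2) by blast
  interpret m: dbl M c by (rule c)
  interpret n: dbl N d by (rule d)
  obtain C p :: real where Cp: "C > 0" "p \<ge> 1" and C2: "\<And>x r E. r > 0 \<Longrightarrow> E \<in> sets M \<Longrightarrow> E \<subseteq> ball x r \<Longrightarrow>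
        measure N E \<le> C * measure N (ball x r) * (measure M E / measure M (ball x r)) powr (1 / p)"
    using assms(3) unfolding cond2_def by blast
  define \<delta> where "\<delta> = min (1/2) ((1/(2*C)) powr p)"
  have dpos: "\<delta> > 0" unfolding \<delta>_def using Cp by simp
  have d1: "\<delta> < 1" unfolding \<delta>_def by simp
  have dpow: "\<delta> powr (1/p) \<le> 1/(2*C)"
  proof -
    have "\<delta> powr (1/p) \<le> ((1/(2*C)) powr p) powr (1/p)"
      unfolding \<delta>_def using Cp by (intro powr_mono2) auto
    also have "\<dots> = 1/(2*C)" using Cp by (simp add: powr_powr)
    finally show ?thesis .
  qed
  show ?thesis unfolding cond1_def
  proof (rule exI[of _ "1/4::real"], rule exI[of _ \<delta>], intro conjI allI impI)
    show "0 < (1/4::real)" "(1/4::real) < 1" "0 < \<delta>" "\<delta> < 1" using dpos d1 by auto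
    fix x r E assume r: "r > 0" and E: "E \<in> sets N" "E \<subseteq> ball x r"
      and small: "measure N E \<le> 1/4 * measure N (ball x r)"
    have EM: "E \<in> sets M" using E m.sets_M n.sets_M by simp
    show "measure M E \<le> (1 - \<delta>) * measure M (ball x r)"
    proof (rule ccontr)
      assume "\<not> ?thesis"
      then have big: "measure M E > (1 - \<delta>) * measure M (ball x r)" by simp
      define F where "F = ball x r - E"
      have FM: "F \<in> sets M" unfolding F_def using EM by auto
      have mB: "measure M (ball x r) > 0" using m.ball_pos[OF r] .
      have nB: "measure N (ball x r) > 0" using n.ball_pos[OF r] .
      have mF: "measure M F = measure M (ball x r) - measure M E"
        unfolding F_def by (rule measure_Diff) (use EM E in \<open>auto simp: fmeasurableD2[OF m.ball_fmeasurable, simplified]\<close>)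
      have nF: "measure N F = measure N (ball x r) - measure N E"
        unfolding F_def by (rule measure_Diff) (use E in \<open>auto simp: fmeasurableD2[OF n.ball_fmeasurable, simplified]\<close>)
      have ratio: "measure M F / measure M (ball x r) \<le> \<delta>"
        using big mB unfolding mF by (simp add: field_simps)
      have "measure N F \<le> C * measure N (ball x r) * (measure M F / measure M (ball x r)) powr (1 / p)"
        using C2[OF r FM] unfolding F_def by blast
      also have "\<dots> \<le> C * measure N (ball x r) * \<delta> powr (1/p)"
        using ratio Cp nB by (intro mult_left_mono powr_mono2) auto
      also have "\<dots> \<le> C * measure N (ball x r) * (1/(2*C))"
        using dpow Cp nB by (intro mult_left_mono) auto
      also have "\<dots> = measure N (ball x r) / 2" using Cp by simp
      finally have "measure N F \<le> measure N (ball x r) / 2" .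
      then show False using nF small nB by simp
    qed
  qed
qed

lemma wm_lemma:
  assumes "doubling_measure M" "doubling_measure N" "cond2 M N"
  shows "weighted_measure M N"
proof -
  obtain c where c: "dbl M c" using dbl_of assms(1) by blast
  obtain d where d: "dbl N d" using dbl_of assms(2) by blast
  interpret m: dbl M c by (rule c)
  interpret n: dbl N d by (rule d)
  obtain C p :: real where Cp: "C > 0" "p \<ge> 1" and C2: "\<And>x r E. r > 0 \<Longrightarrow> E \<in> sets M \<Longrightarrow> E \<subseteq> ball x r \<Longrightarrow>
        measure N E \<le> C * measure N (ball x r) * (measure M E / measure M (ball x r)) powr (1 / p)"
    using assms(3) unfolding cond2_def by blast
  define Bn where "Bn n = ball (undefined::'a) (real (Suc n))" for n
  have BnU: "(\<Union>n. Bn n) = UNIV"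
  proof (intro set_eqI iffI)
    fix y :: 'a
    obtain n where "dist undefined y < real n" using reals_Archimedean2 by blast
    then have "y \<in> Bn n" unfolding Bn_def by simp
    then show "y \<in> (\<Union>n. Bn n)" by blast
  qed auto
  have sN: "sets N = sets M" using m.sets_M n.sets_M by simp
  have ac: "absolutely_continuous M N" unfolding absolutely_continuous_def
  proof
    fix E assume E: "E \<in> null_sets M"
    have EM: "E \<in> sets M" using E by auto
    have "E \<inter> Bn n \<in> null_sets N" for n
    proof -
      have "E \<inter> Bn n \<in> null_sets M" using E by (rule null_set_Int2) (auto simp: Bn_def)
      then have mE: "measure M (E \<inter> Bn n) = 0" by (simp add: measure_def null_setsD1)
      have "measure N (E \<inter> Bn n) \<le> C * measure N (Bn n) * (measure M (E \<inter> Bn n) / measure M (Bn n)) powr (1 / p)"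
        unfolding Bn_def by (rule C2) (use EM in auto)
      then have "measure N (E \<inter> Bn n) \<le> 0" unfolding mE by simp
      then have "measure N (E \<inter> Bn n) = 0" using measure_nonneg[of N "E \<inter> Bn n"] by linarith
      moreover have "E \<inter> Bn n \<in> fmeasurable N"
        by (rule n.sub_fm[of _ "Bn n"]) (use EM sN in \<open>auto simp: Bn_def\<close>)
      ultimately show ?thesis
        by (metis emeasure_eq_measure2 ennreal_0 fmeasurableD null_setsI)
    qed
    then have "(\<Union>n. E \<inter> Bn n) \<in> null_sets N" by blast
    moreover have "(\<Union>n. E \<inter> Bn n) = E" using BnU by blast
    ultimately show "E \<in> null_sets N" by simp
  qed
  have sf: "sigma_finite_measure M"
  proof
    show "\<exists>A. countable A \<and> A \<subseteq> sets M \<and> \<Union> A = space M \<and> (\<forall>a\<in>A. emeasure M a \<noteq> \<infinity>)"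
    proof (intro exI[of _ "range Bn"] conjI)
      show "countable (range Bn)" by simp
      show "range Bn \<subseteq> sets M" unfolding Bn_def by auto
      show "\<Union> (range Bn) = space M" using BnU by simp
      show "\<forall>a\<in>range Bn. emeasure M a \<noteq> \<infinity>"
        unfolding Bn_def using m.fin by (auto simp: less_top[symmetric])
    qed
  qed
  obtain f where f: "f \<in> borel_measurable M" "density M f = N"
    using sigma_finite_measure.Radon_Nikodym[OF sf ac sN] by blast
  have eqN: "emeasure N A = (\<integral>\<^sup>+ x. f x * indicator A x \<partial>M)" if "A \<in> sets M" for A
    using emeasure_density[OF f(1) that] f(2) by simp
  have "AE x in M. f x * indicator (Bn n) x \<noteq> \<infinity>" for n
  proof (rule nn_integral_PInf_AE)
    have [measurable]: "Bn n \<in> sets M" by (simp add: Bn_def)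
    show "(\<lambda>x. f x * indicator (Bn n) x) \<in> borel_measurable M" using f(1) by measurable
    have "(\<integral>\<^sup>+ x. f x * indicator (Bn n) x \<partial>M) = emeasure N (Bn n)" using eqN[of "Bn n"] unfolding Bn_def by simp
    also have "\<dots> \<noteq> \<infinity>" unfolding Bn_def using n.fin by (auto simp: less_top[symmetric])
    finally show "(\<integral>\<^sup>+ x. f x * indicator (Bn n) x \<partial>M) \<noteq> \<infinity>" .
  qed
  then have "AE x in M. \<forall>n. f x * indicator (Bn n) x \<noteq> \<infinity>" by (simp add: AE_all_countable)
  then have AEf: "AE x in M. f x \<noteq> \<infinity>"
  proof (rule eventually_mono)
    fix x assume h: "\<forall>n. f x * indicator (Bn n) x \<noteq> \<infinity>"
    obtain n where "x \<in> Bn n" using BnU by blast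
    then show "f x \<noteq> \<infinity>" using h[rule_format, of n] by simp
  qed
  define \<omega> where "\<omega> x = enn2real (f x)" for x
  have cong: "(\<integral>\<^sup>+ x. ennreal (\<omega> x) * indicator A x \<partial>M) = (\<integral>\<^sup>+ x. f x * indicator A x \<partial>M)" for A
    by (rule nn_integral_cong_AE) (use AEf in \<open>auto simp: \<omega>_def less_top[symmetric] elim!: eventually_mono\<close>)
  have om: "\<omega> \<in> borel_measurable M" unfolding \<omega>_def using f(1) by measurable
  show ?thesis unfolding weighted_measure_def
  proof (intro exI[of _ \<omega>] conjI allI impI ballI)
    show "\<omega> \<in> borel_measurable M" by (rule om)
    show "0 \<le> \<omega> y" for y unfolding \<omega>_def by simp
    show "emeasure N A = (\<integral>\<^sup>+ y \<in> A. ennreal (\<omega> y) \<partial>M)" if "A \<in> sets M" for A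
      using eqN[OF that] cong[of A] by simp
    fix x and r :: real assume r: "r > 0"
    show "set_integrable M (ball x r) \<omega>" unfolding set_integrable_def
    proof (rule integrableI_nonneg)
      have [measurable]: "ball x r \<in> sets M" by simp
      show "(\<lambda>y. indicator (ball x r) y *\<^sub>R \<omega> y) \<in> borel_measurable M" using om by measurable
      show "AE y in M. 0 \<le> indicator (ball x r) y *\<^sub>R \<omega> y" by (simp add: \<omega>_def)
      have "(\<integral>\<^sup>+ y. ennreal (indicator (ball x r) y *\<^sub>R \<omega> y) \<partial>M) = (\<integral>\<^sup>+ y. ennreal (\<omega> y) * indicator (ball x r) y \<partial>M)"
        by (intro nn_integral_cong) (auto split: split_indicator)
      also have "\<dots> = emeasure N (ball x r)" using cong eqN[of "ball x r"] by simp
      also have "\<dots> < \<infinity>" using n.fin[OF r] .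
      finally show "(\<integral>\<^sup>+ y. ennreal (indicator (ball x r) y *\<^sub>R \<omega> y) \<partial>M) < \<infinity>" .
    qed
  qed
qed

theorem theorem4p3:
  fixes \<mu> \<nu> :: "'a::metric_space measure"
  assumes "doubling_measure \<mu>"
    and "doubling_measure \<nu>"
    and "cond1 \<mu> \<nu>"
  shows "cond2 \<mu> \<nu> \<and> cond4 \<mu> \<nu>"
proof -
  have c2: "cond2 \<mu> \<nu>" using L12 assms by blast
  have c1': "cond1 \<nu> \<mu>" using swap21 assms(1,2) c2 by blast
  have c2': "cond2 \<nu> \<mu>" using L12 assms(1,2) c1' by blast
  obtain c where c: "dbl \<mu> c" using dbl_of assms(1) by blast
  obtain d where d: "dbl \<nu> d" using dbl_of assms(2) by blast
  interpret m: dbl \<mu> c by (rule c)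
  interpret n: dbl \<nu> d by (rule d)
  have ineq: "\<exists>c p::real. c > 0 \<and> p \<ge> 1 \<and>
     (\<forall>x r E. r > 0 \<longrightarrow> E \<in> sets \<mu> \<longrightarrow> E \<subseteq> ball x r \<longrightarrow>
        measure \<nu> E \<ge> c * measure \<nu> (ball x r) * (measure \<mu> E / measure \<mu> (ball x r)) powr p)"
  proof -
    obtain C q :: real where Cq: "C > 0" "q \<ge> 1" and C2: "\<And>x r E. r > 0 \<Longrightarrow> E \<in> sets \<nu> \<Longrightarrow> E \<subseteq> ball x r \<Longrightarrow>
        measure \<mu> E \<le> C * measure \<mu> (ball x r) * (measure \<nu> E / measure \<nu> (ball x r)) powr (1 / q)"
      using c2' unfolding cond2_def by blast
    show ?thesis
    proof (rule exI[of _ "1 / C powr q"], rule exI[of _ q], intro conjI allI impI)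
      show "1 / C powr q > 0" "q \<ge> 1" using Cq by auto
      fix x r E assume r: "r > 0" and E: "E \<in> sets \<mu>" "E \<subseteq> ball x r"
      have EN: "E \<in> sets \<nu>" using E m.sets_M n.sets_M by simp
      have mB: "measure \<mu> (ball x r) > 0" using m.ball_pos[OF r] .
      have nB: "measure \<nu> (ball x r) > 0" using n.ball_pos[OF r] .
      define u where "u = measure \<mu> E / measure \<mu> (ball x r)"
      define v where "v = measure \<nu> E / measure \<nu> (ball x r)"
      have u0: "u \<ge> 0" and v0: "v \<ge> 0" unfolding u_def v_def using mB nB by auto
      have "u \<le> C * v powr (1/q)" using C2[OF r EN E(2)] mB unfolding u_def v_def by (simp add: field_simps)
      then have "u powr q \<le> (C * v powr (1/q)) powr q" using u0 Cq by (intro powr_mono2) auto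
      also have "\<dots> = C powr q * v" using Cq v0 by (simp add: powr_mult powr_powr)
      finally have uv: "u powr q \<le> C powr q * v" .
      have Cqp: "C powr q > 0" using Cq by simp
      have "1 / C powr q * measure \<nu> (ball x r) * u powr q \<le> 1 / C powr q * measure \<nu> (ball x r) * (C powr q * v)"
        using uv Cqp nB by (intro mult_left_mono) auto
      also have "\<dots> = measure \<nu> E" unfolding v_def using Cqp nB by simp
      finally show "1 / C powr q * measure \<nu> (ball x r) * (measure \<mu> E / measure \<mu> (ball x r)) powr q \<le> measure \<nu> E"
        unfolding u_def .
    qed
  qed
  have wm: "weighted_measure \<mu> \<nu>" using wm_lemma assms(1,2) c2 by blast
  show ?thesis using c2 wm ineq unfolding cond4_def by blast
qed

end
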